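(* Let $h,g_1,g_2>0$ be reals and for $\Delta>0$ define (logarithms base $2$, $[x]^+=\max\{x,0\}$) $$I_1(\Delta)=\log\Big(1+\frac{h^2}{1+\Delta}+g_2^2\Big),\quad I_2(\Delta)=\log(1+g_1^2+g_2^2)-\log\frac{1+\Delta}{\Delta},\quad R_{\mathrm{QMF}}(\Delta)=[\min\{I_1(\Delta),I_2(\Delta)\}]^+.$$ Then $\Delta^*=\frac{1+h^2+g_2^2}{g_1^2}$ maximizes $R_{\mathrm{QMF}}(\Delta)$ over $\Delta>0$, and it is the solution of $I_1(\Delta)=I_2(\Delta)$.
   Context: $R_{\mathrm{QMF}}(\Delta)$ is the quantize-map-and-forward rate of the full-duplex Gaussian single-relay channel ($Y_r=\mathsf hX+Z_r$, $Y=\mathsf g_1X_r+\mathsf g_2X+Z$, unit powers, unit noise, $h=|\mathsf h|$, $g_i=|\mathsf g_i|$) when the relay uses a Gaussian vector quantizer $\hat Y_r=Y_r+\hat Z_r$, $\hat Z_r\sim\mathcal{CN}(0,\Delta)$; this is the optimal quantizer when the relay knows all channel magnitudes. *)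

theory Defs
  imports Complex_Main
begin

definition qmf_I1 :: "real \<Rightarrow> real \<Rightarrow> real \<Rightarrow> real" where
  "qmf_I1 h g2 \<Delta> = log 2 (1 + h\<^sup>2 / (1 + \<Delta>) + g2\<^sup>2)"

definition qmf_I2 :: "real \<Rightarrow> real \<Rightarrow> real \<Rightarrow> real" where
  "qmf_I2 g1 g2 \<Delta> = log 2 (1 + g1\<^sup>2 + g2\<^sup>2) - log 2 ((1 + \<Delta>) / \<Delta>)"

definition R_QMF :: "real \<Rightarrow> real \<Rightarrow> real \<Rightarrow> real \<Rightarrow> real" where
  "R_QMF h g1 g2 \<Delta> = max (min (qmf_I1 h g2 \<Delta>) (qmf_I2 g1 g2 \<Delta>)) 0"

end

theory Submission
  imports Defs
begin

lemma I2_eq: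
  assumes "d > 0"
  shows "qmf_I2 g1 g2 d = log 2 ((1 + g1\<^sup>2 + g2\<^sup>2) * d / (1 + d))"
proof -
  have c: "1 + g1\<^sup>2 + g2\<^sup>2 > 0" by (simp add: add_pos_nonneg)
  have p: "(1 + d) / d > 0" using assms by simp
  have "log 2 ((1 + g1\<^sup>2 + g2\<^sup>2) / ((1 + d) / d)) = log 2 (1 + g1\<^sup>2 + g2\<^sup>2) - log 2 ((1 + d) / d)"
    using c p by (rule log_divide_pos)
  moreover have "(1 + g1\<^sup>2 + g2\<^sup>2) / ((1 + d) / d) = (1 + g1\<^sup>2 + g2\<^sup>2) * d / (1 + d)"
    using assms by (simp add: field_simps)
  ultimately show ?thesis unfolding qmf_I2_def by simp
qed

lemma I1_mono:
  assumes "0 < a" "a \<le> b"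
  shows "qmf_I1 h g2 b \<le> qmf_I1 h g2 a"
proof -
  have "h\<^sup>2 / (1 + b) \<le> h\<^sup>2 / (1 + a)" using assms by (intro divide_left_mono) auto
  moreover have "0 < 1 + h\<^sup>2 / (1 + b) + g2\<^sup>2" using assms by (simp add: add_pos_nonneg)
  ultimately show ?thesis unfolding qmf_I1_def by (simp add: log_le_cancel_iff)
qed

lemma I2_mono:
  assumes "0 < a" "a \<le> b"
  shows "qmf_I2 g1 g2 a \<le> qmf_I2 g1 g2 b"
proof -
  have c: "1 + g1\<^sup>2 + g2\<^sup>2 > 0" by (simp add: add_pos_nonneg)
  have "a / (1 + a) \<le> b / (1 + b)" using assms by (simp add: field_simps)
  hence "(1 + g1\<^sup>2 + g2\<^sup>2) * a / (1 + a) \<le> (1 + g1\<^sup>2 + g2\<^sup>2) * b / (1 + b)"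
    using c by (metis mult_left_mono less_imp_le times_divide_eq_right)
  moreover have "0 < (1 + g1\<^sup>2 + g2\<^sup>2) * a / (1 + a)" using c assms by simp
  ultimately show ?thesis using assms by (simp add: I2_eq log_le_cancel_iff)
qed

lemma eq_iff:
  assumes "d > 0" "g1 > 0"
  shows "qmf_I1 h g2 d = qmf_I2 g1 g2 d \<longleftrightarrow> d = (1 + h\<^sup>2 + g2\<^sup>2) / g1\<^sup>2"
proof -
  have c: "1 + g1\<^sup>2 + g2\<^sup>2 > 0" by (simp add: add_pos_nonneg)
  have p1: "0 < 1 + h\<^sup>2 / (1 + d) + g2\<^sup>2" using assms by (simp add: add_pos_nonneg)
  have p2: "0 < (1 + g1\<^sup>2 + g2\<^sup>2) * d / (1 + d)" using c assms by simp
  have "qmf_I1 h g2 d = qmf_I2 g1 g2 d \<longleftrightarrow> 1 + h\<^sup>2 / (1 + d) + g2\<^sup>2 = (1 + g1\<^sup>2 + g2\<^sup>2) * d / (1 + d)"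
    unfolding qmf_I1_def I2_eq[OF assms(1)] using p1 p2 by (smt (verit) log_le_cancel_iff one_less_numeral_iff semiring_norm(76))
  also have "\<dots> \<longleftrightarrow> (1 + d) + h\<^sup>2 + g2\<^sup>2 * (1 + d) = (1 + g1\<^sup>2 + g2\<^sup>2) * d"
    using assms by (simp add: field_simps)
  also have "\<dots> \<longleftrightarrow> g1\<^sup>2 * d = 1 + h\<^sup>2 + g2\<^sup>2" by (simp add: algebra_simps eq_commute)
  also have "\<dots> \<longleftrightarrow> d = (1 + h\<^sup>2 + g2\<^sup>2) / g1\<^sup>2" using assms by (auto simp: field_simps)
  finally show ?thesis .
qed

theorem mainTheorem8:
  fixes h g1 g2 :: real
  assumes "h > 0" and "g1 > 0" and "g2 > 0"
  defines "\<Delta>s \<equiv> (1 + h\<^sup>2 + g2\<^sup>2) / g1\<^sup>2"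
  shows "\<Delta>s > 0
    \<and> (\<forall>\<Delta>>0. R_QMF h g1 g2 \<Delta> \<le> R_QMF h g1 g2 \<Delta>s)
    \<and> qmf_I1 h g2 \<Delta>s = qmf_I2 g1 g2 \<Delta>s
    \<and> (\<forall>\<Delta>>0. qmf_I1 h g2 \<Delta> = qmf_I2 g1 g2 \<Delta> \<longrightarrow> \<Delta> = \<Delta>s)"
proof -
  have pos: "\<Delta>s > 0" unfolding \<Delta>s_def using assms by (simp add: add_pos_nonneg)
  have eq: "qmf_I1 h g2 \<Delta>s = qmf_I2 g1 g2 \<Delta>s" using eq_iff[OF pos assms(2)] \<Delta>s_def by simp
  have "R_QMF h g1 g2 d \<le> R_QMF h g1 g2 \<Delta>s" if d: "d > 0" for d
  proof -
    have "min (qmf_I1 h g2 d) (qmf_I2 g1 g2 d) \<le> qmf_I1 h g2 \<Delta>s"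
    proof (cases "d \<le> \<Delta>s")
      case True
      then have "qmf_I2 g1 g2 d \<le> qmf_I2 g1 g2 \<Delta>s" using I2_mono d by blast
      then show ?thesis using eq by linarith
    next
      case False
      then have "qmf_I1 h g2 d \<le> qmf_I1 h g2 \<Delta>s" using I1_mono pos by force
      then show ?thesis by linarith
    qed
    then show ?thesis unfolding R_QMF_def using eq by simp
  qed
  moreover have "\<forall>d>0. qmf_I1 h g2 d = qmf_I2 g1 g2 d \<longrightarrow> d = \<Delta>s"
    using eq_iff assms(2) \<Delta>s_def by blast
  ultimately show ?thesis using pos eq by blast
qed

end
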